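(* Let $1\le k\le n$ be integers, $\boldsymbol c\in\mathbb{R}^n$, $\theta\in[0,1)$, $\lambda\ge 2$, and $\boldsymbol E\in\mathbb{R}^{n\times d}$ with unit-norm rows satisfying $\boldsymbol e_i^{\mathsf T}\boldsymbol e_j>-1$ for all $i\ne j$. Let $f(\boldsymbol x)=\theta(k-1)\boldsymbol c^{\mathsf T}\boldsymbol x+(1-\theta)\boldsymbol x^{\mathsf T}(\lambda\boldsymbol I-\boldsymbol E\boldsymbol E^{\mathsf T})\boldsymbol x$ and $P=\{\boldsymbol x\in[0,1]^n:\boldsymbol 1^{\mathsf T}\boldsymbol x=k\}$. Consider the Frank--Wolfe iteration with exact line search: given $\boldsymbol x^{(t)}\in P$, let $\boldsymbol s^{(t)}\in\{0,1\}^n$ be the indicator vector of the $k$ largest entries of $\nabla f(\boldsymbol x^{(t)})$, $\boldsymbol d^{(t)}=\boldsymbol s^{(t)}-\boldsymbol x^{(t)}$, $\gamma^{(t)}\in\arg\max_{\gamma\in[0,1]}f(\boldsymbol x^{(t)}+\gamma\boldsymbol d^{(t)})$, and $\boldsymbol x^{(t+1)}=\boldsymbol x^{(t)}+\gamma^{(t)}\boldsymbol d^{(t)}$. Let $\boldsymbol x^\ast\in\{0,1\}^n\cap P$ be an integral local maximizer of $f$ on $P$. Then there exists a neighborhood $\mathcal N(\boldsymbol x^\ast)$ of $\boldsymbol x^\ast$ such that, whenever an iterate $\boldsymbol x^{(t)}\in P\cap\mathcal N(\boldsymbol x^\ast)$ with $\boldsymbol x^{(t)}\ne\boldsymbol x^\ast$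 occurs, the top-$k$ indicator $\boldsymbol s^{(t)}$ is uniquely determined and equals $\boldsymbol x^\ast$, the exact line search returns $\gamma^{(t)}=1$ (uniquely), and hence $\boldsymbol x^{(t+1)}=\boldsymbol x^\ast$.
   Context: A local maximizer of $f$ on $P$ is a point $\boldsymbol x^\ast\in P$ with $f(\boldsymbol x)\le f(\boldsymbol x^\ast)$ for all $\boldsymbol x\in P$ near $\boldsymbol x^\ast$. The exact line search maximizes the one-dimensional quadratic $\gamma\mapsto f(\boldsymbol x^{(t)}+\gamma\boldsymbol d^{(t)})$ over $[0,1]$. *)

theory Defs
  imports "HOL-Analysis.Analysis"
begin

definition fw_obj :: "nat \<Rightarrow> real \<Rightarrow> real \<Rightarrow> real^'n \<Rightarrow> real^'d^'n \<Rightarrow> real^'n \<Rightarrow> real" where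
  "fw_obj k theta lam c E x =
     theta * (real k - 1) * (c \<bullet> x) + (1 - theta) * (x \<bullet> ((mat lam - E ** transpose E) *v x))"

definition fw_P :: "nat \<Rightarrow> (real^'n) set" where
  "fw_P k = {x. (\<forall>i. 0 \<le> x $ i \<and> x $ i \<le> 1) \<and> (\<Sum>i\<in>UNIV. x $ i) = real k}"

definition grad :: "(real^'n \<Rightarrow> real) \<Rightarrow> real^'n \<Rightarrow> real^'n" where
  "grad f x = (THE g. GDERIV f x :> g)"

definition is_topk_indicator :: "nat \<Rightarrow> real^'n \<Rightarrow> real^'n \<Rightarrow> bool" where
  "is_topk_indicator k g s \<longleftrightarrow>
     (\<forall>i. s $ i = 0 \<or> s $ i = 1) \<and> (\<Sum>i\<in>UNIV. s $ i) = real k \<and>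
     (\<forall>i j. s $ i = 1 \<and> s $ j = 0 \<longrightarrow> g $ j \<le> g $ i)"

definition line_search_argmax :: "(real^'n \<Rightarrow> real) \<Rightarrow> real^'n \<Rightarrow> real^'n \<Rightarrow> real set" where
  "line_search_argmax f x d =
     {\<gamma> \<in> {0..1}. \<forall>\<gamma>'\<in>{0..1}. f (x + \<gamma>' *\<^sub>R d) \<le> f (x + \<gamma> *\<^sub>R d)}"

definition local_maximizer_on :: "(real^'n \<Rightarrow> real) \<Rightarrow> (real^'n) set \<Rightarrow> real^'n \<Rightarrow> bool" where
  "local_maximizer_on f P xs \<longleftrightarrow>
     xs \<in> P \<and> (\<exists>e>0. \<forall>x\<in>P. dist x xs < e \<longrightarrow> f x \<le> f xs)"

end

theory Submission
  imports Defs
begin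

definition gG :: "real \<Rightarrow> real \<Rightarrow> real^'n \<Rightarrow> real^'n^'n \<Rightarrow> real^'n \<Rightarrow> real^'n" where
 "gG a b c M y = a *\<^sub>R c + b *\<^sub>R (M *v y + y v* M)"

lemma expand:
  fixes M :: "real^'n^'n"
  shows "a * (c \<bullet> (y+u)) + b * ((y+u) \<bullet> (M *v (y+u))) =
    a*(c\<bullet>y) + b*(y\<bullet>(M*v y)) + gG a b c M y \<bullet> u + b * (u \<bullet> (M *v u))"
  unfolding gG_def
  by (simp add: matrix_vector_right_distrib inner_add_left inner_add_right dot_lmul_matrix
      inner_commute[of u "M *v y"] algebra_simps)

lemma deriv:
  fixes M :: "real^'n^'n"
  shows "((\<lambda>y. a*(c\<bullet>y) + b*(y\<bullet>(M*v y))) has_derivative (\<lambda>h. h \<bullet> gG a b c M y)) (at y)"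
proof -
  have "((\<lambda>y. a*(c\<bullet>y) + b*(y\<bullet>(M*v y))) has_derivative
     (\<lambda>h. a*(c\<bullet>h) + b*(y \<bullet> (M *v h) + h \<bullet> (M *v y)))) (at y)"
    using bounded_linear_imp_has_derivative[OF matrix_vector_mul_bounded_linear[of M]]
    by (intro derivative_eq_intros) auto
  moreover have "(\<lambda>h. a*(c\<bullet>h) + b*(y \<bullet> (M *v h) + h \<bullet> (M *v y))) = (\<lambda>h. h \<bullet> gG a b c M y)"
    unfolding gG_def
    by (auto simp: fun_eq_iff inner_add_right inner_add_left dot_lmul_matrix[symmetric] inner_commute algebra_simps)
  ultimately show ?thesis by simp
qed

lemma grad_eq:
  fixes M :: "real^'n^'n"
  assumes "\<And>y. f y = a*(c\<bullet>y) + b*(y\<bullet>(M*v y))"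
  shows "grad f y = gG a b c M y"
proof -
  have f: "f = (\<lambda>y. a*(c\<bullet>y) + b*(y\<bullet>(M*v y)))" using assms by auto
  have D: "GDERIV f y :> gG a b c M y" unfolding gderiv_def f by (rule deriv)
  have "g = gG a b c M y" if "GDERIV f y :> g" for g
  proof -
    have "(\<lambda>h. h \<bullet> g) = (\<lambda>h. h \<bullet> gG a b c M y)"
      using has_derivative_unique that D unfolding gderiv_def by blast
    then have "(g - gG a b c M y) \<bullet> g = (g - gG a b c M y) \<bullet> gG a b c M y" by metis
    then have "(g - gG a b c M y) \<bullet> (g - gG a b c M y) = 0" by (simp add: inner_diff_right)
    then show ?thesis by simp
  qed
  then show ?thesis unfolding grad_def using D by blast
qed

lemma bl_vm: "bounded_linear (\<lambda>x::real^'n. x v* (M::real^'n^'n))"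
proof -
  have "(\<lambda>x::real^'n. x v* M) = (\<lambda>x. transpose M *v x)"
    by (metis vector_transpose_matrix transpose_transpose)
  then show ?thesis using matrix_vector_mul_bounded_linear[of "transpose M"] by metis
qed

lemma cont_gG: fixes M :: "real^'n^'n" shows "continuous_on UNIV (\<lambda>y. gG a b c M y $ i)"
proof -
  have "continuous_on UNIV (\<lambda>y::real^'n. y v* M)" by (rule linear_continuous_on[OF bl_vm])
  moreover have "continuous_on UNIV (\<lambda>y::real^'n. M *v y)" by (rule linear_continuous_on) simp
  ultimately have "continuous_on UNIV (\<lambda>y. a *\<^sub>R c + b *\<^sub>R (M *v y + y v* M))"
    by (intro continuous_intros)
  then have "continuous_on UNIV (\<lambda>y. (a *\<^sub>R c + b *\<^sub>R (M *v y + y v* M)) $ i)"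
    by (rule continuous_on_component)
  then show ?thesis unfolding gG_def .
qed

lemma sep:
  fixes A B :: "real set"
  assumes "finite A" "finite B" "\<And>a b. a \<in> A \<Longrightarrow> b \<in> B \<Longrightarrow> b < a"
  shows "\<exists>\<tau>. (\<forall>a\<in>A. \<tau> < a) \<and> (\<forall>b\<in>B. b < \<tau>)"
proof (cases "A = {}")
  case True
  show ?thesis
  proof (cases "B = {}")
    case True with \<open>A = {}\<close> show ?thesis by auto
  next
    case False
    then show ?thesis using \<open>A = {}\<close> assms(2)
      by (intro exI[of _ "Max B + 1"]) (auto dest: Max_ge)
  qed
next
  case False
  show ?thesis
  proof (cases "B = {}")
    case True with \<open>A \<noteq> {}\<close> show ?thesis using assms(1)
      by (intro exI[of _ "Min A - 1"]) (auto dest: Min_le)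
  next
    case BF: False
    have "Max B < Min A" using assms False BF
      by (metis Max_in Min_in)
    moreover have "\<forall>a\<in>A. Min A \<le> a" "\<forall>b\<in>B. b \<le> Max B" using assms by auto
    ultimately show ?thesis
      by (intro exI[of _ "(Max B + Min A)/2"]) force
  qed
qed

lemma mult_axis_entry:
  fixes M :: "real^'n^'n"
  shows "(M *v axis j 1) $ i = M $ i $ j"
  by (simp add: matrix_vector_mult_basis column_def)

lemma quad_axis:
  fixes M :: "real^'n^'n"
  shows "(axis j 1 - axis i 1) \<bullet> (M *v (axis j 1 - axis i 1)) = M$j$j - M$j$i - M$i$j + M$i$i"
  by (simp add: matrix_vector_mult_diff_distrib inner_diff_left inner_diff_right inner_axis' mult_axis_entry)

lemma EEt_entry:
  fixes E :: "real^'d^'n"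
  shows "(E ** transpose E) $ i $ j = E$i \<bullet> E$j"
  by (simp add: matrix_matrix_mult_def transpose_def inner_vec_def)

lemma sum_axis: "(\<Sum>l\<in>UNIV. (axis j (1::real) :: real^'n) $ l) = 1"
  by (simp add: axis_def)

theorem theorem4:
  fixes k :: nat and c :: "real^'n" and theta lam :: real
    and E :: "real^'d^'n" and xs :: "real^'n"
  assumes "1 \<le> k" and "k \<le> CARD('n)"
    and "0 \<le> theta" and "theta < 1" and "lam \<ge> 2"
    and "\<And>i. norm (E $ i) = 1"
    and "\<And>i j. i \<noteq> j \<Longrightarrow> (E $ i) \<bullet> (E $ j) > -1"
    and "\<forall>i. xs $ i = 0 \<or> xs $ i = 1"
    and "local_maximizer_on (fw_obj k theta lam c E) (fw_P k) xs"
  shows "\<exists>N. open N \<and> xs \<in> N \<and>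
    (\<forall>x \<in> fw_P k \<inter> N. x \<noteq> xs \<longrightarrow>
       {s. is_topk_indicator k (grad (fw_obj k theta lam c E) x) s} = {xs} \<and>
       line_search_argmax (fw_obj k theta lam c E) x (xs - x) = {1} \<and>
       (\<forall>s \<gamma>. is_topk_indicator k (grad (fw_obj k theta lam c E) x) s \<and>
              \<gamma> \<in> line_search_argmax (fw_obj k theta lam c E) x (s - x) \<longrightarrow>
              x + \<gamma> *\<^sub>R (s - x) = xs))"
proof -
  define a where "a = theta * (real k - 1)"
  define b where "b = 1 - theta"
  define M where "M = mat lam - E ** transpose E"
  define f where "f = fw_obj k theta lam c E"
  define G where "G = gG a b c M"
  have bpos: "b > 0" using assms(4) by (simp add: b_def)
  have fexp: "f y = a*(c\<bullet>y) + b*(y\<bullet>(M*v y))" for y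
    by (simp add: f_def fw_obj_def a_def b_def M_def)
  have gradG: "grad f y = G y" for y
    unfolding G_def by (rule grad_eq[OF fexp])
  have expd: "f (y + u) = f y + G y \<bullet> u + b * (u \<bullet> (M *v u))" for y u
    unfolding fexp G_def by (rule expand)
  have Mentry: "M $ i $ j = (if i = j then lam else 0) - E$i \<bullet> E$j" for i j
    by (simp add: M_def EEt_entry mat_def)
  have Eii: "E$i \<bullet> E$i = 1" for i
    using assms(6)[of i] by (simp add: dot_square_norm)
  have xsP: "xs \<in> fw_P k" and lm: "\<exists>e>0. \<forall>x\<in>fw_P k. dist x xs < e \<longrightarrow> f x \<le> f xs"
    using assms(9) unfolding local_maximizer_on_def f_def by auto
  obtain e where e: "e > 0" "\<And>x. x \<in> fw_P k \<Longrightarrow> dist x xs < e \<Longrightarrow> f x \<le> f xs"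
    using lm by blast
  have sumxs: "(\<Sum>i\<in>UNIV. xs $ i) = real k" using xsP by (simp add: fw_P_def)
  have gap: "G xs $ j < G xs $ i" if i1: "xs $ i = 1" and j0: "xs $ j = 0" for i j
  proof -
    have ij: "i \<noteq> j" using i1 j0 by auto
    define d :: "real^'n" where "d = axis j 1 - axis i 1"
    define t where "t = min 1 (e/4)"
    have t: "0 < t" "t \<le> 1" "t \<le> e/4" using e(1) by (auto simp: t_def)
    have nd: "norm d \<le> 2" unfolding d_def using norm_triangle_ineq4[of "axis j (1::real)" "axis i 1"] by simp
    have inP: "xs + t *\<^sub>R d \<in> fw_P k"
    proof -
      have comp: "(xs + t *\<^sub>R d) $ l = (if l = j then t else if l = i then 1 - t else xs $ l)" for l
        using i1 j0 ij by (auto simp: d_def axis_def)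
      have "(\<Sum>l\<in>UNIV. (xs + t *\<^sub>R d) $ l) = (\<Sum>l\<in>UNIV. xs $ l) + t * ((\<Sum>l\<in>UNIV. axis j 1 $ l) - (\<Sum>l\<in>UNIV. (axis i 1 :: real^'n) $ l))"
        by (simp add: d_def sum.distrib sum_subtractf sum_distrib_left algebra_simps)
      also have "\<dots> = real k" using sumxs by (simp add: sum_axis)
      finally show ?thesis using comp t xsP unfolding fw_P_def by auto
    qed
    have "dist (xs + t *\<^sub>R d) xs = t * norm d" by (simp add: dist_norm t(1) less_imp_le)
    also have "\<dots> \<le> t * 2" using nd t by (simp add: mult_left_mono)
    also have "\<dots> < e" using t e(1) by linarith
    finally have "f (xs + t *\<^sub>R d) \<le> f xs" using e(2) inP by blast
    then have le: "t * (G xs \<bullet> d) + b * (t * t) * (d \<bullet> (M *v d)) \<le> 0"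
      using expd[of xs "t *\<^sub>R d"] by (simp add: matrix_vector_mult_scaleR algebra_simps)
    have q: "d \<bullet> (M *v d) = 2 * (lam - 1) + 2 * (E$i \<bullet> E$j)"
      unfolding d_def quad_axis using ij by (simp add: Mentry Eii inner_commute[of "E$j"])
    have qpos: "d \<bullet> (M *v d) > 0" unfolding q using assms(5) assms(7)[OF ij] by (simp add: algebra_simps)
    have "b * (t * t) * (d \<bullet> (M *v d)) > 0" using bpos t qpos by simp
    then have "t * (G xs \<bullet> d) < 0" using le by linarith
    then have "G xs \<bullet> d < 0" using t(1) by (simp add: mult_less_0_iff)
    then show ?thesis by (simp add: d_def inner_diff_right inner_axis)
  qed
  obtain \<tau> where tau: "\<And>i. xs $ i = 1 \<Longrightarrow> \<tau> < G xs $ i" "\<And>j. xs $ j = 0 \<Longrightarrow> G xs $ j < \<tau>"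
  proof -
    have "\<exists>\<tau>. (\<forall>a\<in>(\<lambda>i. G xs $ i) ` {i. xs $ i = 1}. \<tau> < a) \<and> (\<forall>b\<in>(\<lambda>i. G xs $ i) ` {i. xs $ i = 0}. b < \<tau>)"
      by (rule sep) (auto intro: gap)
    then show ?thesis using that by auto
  qed
  define U where "U = (\<Inter>i\<in>{i. xs $ i = 1}. {y. \<tau> < G y $ i}) \<inter> (\<Inter>j\<in>{j. xs $ j = 0}. {y. G y $ j < \<tau>})"
  have contG: "continuous_on UNIV (\<lambda>y. G y $ i)" for i unfolding G_def by (rule cont_gG)
  have "open U" unfolding U_def
    by (intro open_Int open_INT ballI finite open_Collect_less contG continuous_on_const)
  moreover have "xs \<in> U" unfolding U_def using tau by auto
  ultimately obtain r where r: "r > 0" "ball xs r \<subseteq> U" using open_contains_ball by blast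
  have inU1: "\<tau> < G y $ i" if "y \<in> U" "xs $ i = 1" for y i
    using that unfolding U_def by auto
  have inU2: "G y $ j < \<tau>" if "y \<in> U" "xs $ j = 0" for y j
    using that unfolding U_def by auto
  show ?thesis
  proof (intro exI[of _ "ball xs r"] conjI ballI impI allI)
    show "open (ball xs r)" by simp
    show "xs \<in> ball xs r" using r by simp
    fix x assume xPN: "x \<in> fw_P k \<inter> ball xs r" and xne: "x \<noteq> xs"
    have xP: "\<And>i. 0 \<le> x $ i \<and> x $ i \<le> 1" "(\<Sum>i\<in>UNIV. x $ i) = real k"
      using xPN by (auto simp: fw_P_def)
    have xball: "dist xs x < r" using xPN by auto
    have pos: "G z \<bullet> (xs - x) > 0" if zU: "z \<in> U" for z
    proof -
      have sd: "(\<Sum>i\<in>UNIV. (xs - x) $ i) = 0" using sumxs xP(2) by (simp add: sum_subtractf)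
      have "G z \<bullet> (xs - x) = (\<Sum>i\<in>UNIV. G z $ i * (xs - x) $ i)" by (simp add: inner_vec_def)
      also have "\<dots> = (\<Sum>i\<in>UNIV. (G z $ i - \<tau>) * (xs - x) $ i) + \<tau> * (\<Sum>i\<in>UNIV. (xs - x) $ i)"
        by (simp add: sum_distrib_left sum.distrib[symmetric] algebra_simps)
      also have "\<dots> = (\<Sum>i\<in>UNIV. (G z $ i - \<tau>) * (xs - x) $ i)" using sd by simp
      also have "\<dots> > 0"
      proof -
        have nn: "(G z $ i - \<tau>) * (xs - x) $ i \<ge> 0" for i
        proof (cases "xs $ i = 1")
          case True
          then have "\<tau> < G z $ i" using inU1[OF zU] by blast
          then show ?thesis using True xP(1)[of i] by simp
        next
          case False
          then have "xs $ i = 0" using assms(8) by metis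
          moreover then have "G z $ i < \<tau>" using inU2[OF zU] by blast
          ultimately show ?thesis using xP(1)[of i] by (simp add: mult_nonpos_nonneg)
        qed
        obtain i0 where ne: "x $ i0 \<noteq> xs $ i0" using xne by (metis vec_eq_iff)
        have "(G z $ i0 - \<tau>) * (xs - x) $ i0 > 0"
        proof (cases "xs $ i0 = 1")
          case True
          then have "\<tau> < G z $ i0" using inU1[OF zU] by blast
          moreover have "x $ i0 < 1" using True ne xP(1)[of i0] by auto
          ultimately show ?thesis using True by simp
        next
          case False
          then have x0: "xs $ i0 = 0" using assms(8) by metis
          then have "G z $ i0 < \<tau>" using inU2[OF zU] by blast
          moreover have "x $ i0 > 0" using x0 ne xP(1)[of i0] by auto
          ultimately show ?thesis using x0 by (simp add: mult_neg_pos)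
        qed
        then show ?thesis using nn by (intro sum_pos2[of UNIV i0]) auto
      qed
      finally show ?thesis .
    qed
    have xU: "x \<in> U" using xPN r(2) by auto
    have topk: "is_topk_indicator k (grad f x) s \<longleftrightarrow> s = xs" for s
    proof
      assume s: "is_topk_indicator k (grad f x) s"
      show "s = xs"
      proof (rule ccontr)
        assume "s \<noteq> xs"
        then obtain i where si: "s $ i \<noteq> xs $ i" by (metis vec_eq_iff)
        have s01: "\<And>l. s $ l = 0 \<or> s $ l = 1" and ssum: "(\<Sum>l\<in>UNIV. s $ l) = real k"
          and sord: "\<And>l m. s $ l = 1 \<Longrightarrow> s $ m = 0 \<Longrightarrow> G x $ m \<le> G x $ l"
          using s unfolding is_topk_indicator_def gradG by auto
        have sd: "(\<Sum>l\<in>UNIV. s $ l - xs $ l) = 0" using ssum sumxs by (simp add: sum_subtractf)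
        show False
        proof (cases "s $ i = 1")
          case True
          then have xi: "xs $ i = 0" using si assms(8) by metis
          have "\<exists>j. s $ j - xs $ j < 0"
          proof (rule ccontr)
            assume "\<not> ?thesis"
            then have "(\<Sum>l\<in>UNIV. s $ l - xs $ l) > 0"
              using True xi by (intro sum_pos2[of UNIV i]) (auto simp: not_less)
            then show False using sd by simp
          qed
          then obtain j where "s $ j - xs $ j < 0" by blast
          then have "s $ j = 0" "xs $ j = 1" using s01[of j] assms(8)[rule_format, of j] by auto
          then show False using sord[OF True] inU1[OF xU] inU2[OF xU] xi by force
        next
          case False
          then have si0: "s $ i = 0" and xi: "xs $ i = 1" using s01 si assms(8) by metis+
          have "\<exists>j. s $ j - xs $ j > 0"
          proof (rule ccontr)
            assume "\<not> ?thesis"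
            then have "(\<Sum>l\<in>UNIV. xs $ l - s $ l) > 0"
              using si0 xi by (intro sum_pos2[of UNIV i]) (auto simp: not_less)
            then show False using sd by (simp add: sum_subtractf)
          qed
          then obtain j where "s $ j - xs $ j > 0" by blast
          then have "s $ j = 1" "xs $ j = 0" using s01[of j] assms(8)[rule_format, of j] by auto
          then show False using sord[OF _ si0] inU1[OF xU] inU2[OF xU] xi by force
        qed
      qed
    next
      assume "s = xs"
      then show "is_topk_indicator k (grad f x) s"
        unfolding is_topk_indicator_def gradG using assms(8) sumxs inU1[OF xU] inU2[OF xU] by fastforce
    qed
    have fless: "f (x + \<gamma> *\<^sub>R (xs - x)) < f xs" if g: "0 \<le> \<gamma>" "\<gamma> < 1" for \<gamma>
    proof -
      define y where "y = x + \<gamma> *\<^sub>R (xs - x)"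
      have xy: "xs - y = (1 - \<gamma>) *\<^sub>R (xs - x)" by (simp add: y_def algebra_simps)
      have "dist xs y = (1 - \<gamma>) * dist xs x" using g by (simp add: dist_norm xy)
      also have "\<dots> \<le> dist xs x" using g by (simp add: mult_left_le_one_le)
      finally have "y \<in> ball xs r" using xball by simp
      then have yU: "y \<in> U" using r(2) by auto
      have e1: "f xs = f y + G y \<bullet> (xs - y) + b * ((xs - y) \<bullet> (M *v (xs - y)))"
        using expd[of y "xs - y"] by simp
      have e2: "f y = f xs + G xs \<bullet> (y - xs) + b * ((y - xs) \<bullet> (M *v (y - xs)))"
        using expd[of xs "y - xs"] by simp
      have mm: "(y - xs) \<bullet> (M *v (y - xs)) = (xs - y) \<bullet> (M *v (xs - y))"
        by (simp add: matrix_vector_mult_diff_distrib inner_diff_left inner_diff_right algebra_simps)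
      have "2 * (f xs - f y) = G y \<bullet> (xs - y) + G xs \<bullet> (xs - y)"
        using e1 e2 mm by (simp add: inner_diff_right algebra_simps)
      also have "\<dots> = (1 - \<gamma>) * (G y \<bullet> (xs - x) + G xs \<bullet> (xs - x))"
        by (simp add: xy algebra_simps)
      also have "\<dots> > 0" using g pos[OF yU] pos[OF \<open>xs \<in> U\<close>] by simp
      finally show ?thesis unfolding y_def by simp
    qed
    have ls: "line_search_argmax f x (xs - x) = {1}"
    proof -
      have "1 \<in> line_search_argmax f x (xs - x)"
        unfolding line_search_argmax_def
      proof (safe)
        fix g :: real assume "g \<in> {0..1}"
        then show "f (x + g *\<^sub>R (xs - x)) \<le> f (x + 1 *\<^sub>R (xs - x))"
          using fless[of g] by (cases "g = 1") (auto simp: less_imp_le)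
      qed auto
      moreover have "g = 1" if "g \<in> line_search_argmax f x (xs - x)" for g
      proof (rule ccontr)
        assume "g \<noteq> 1"
        have g01: "g \<in> {0..1}" and gmax: "\<forall>g'\<in>{0..1}. f (x + g' *\<^sub>R (xs - x)) \<le> f (x + g *\<^sub>R (xs - x))"
          using that unfolding line_search_argmax_def by auto
        have "g \<in> {0..<1}" using g01 \<open>g \<noteq> 1\<close> by auto
        moreover have "f (x + 1 *\<^sub>R (xs - x)) \<le> f (x + g *\<^sub>R (xs - x))"
          using bspec[OF gmax, of 1] by simp
        ultimately show False using fless[of g] by auto
      qed
      ultimately show ?thesis by blast
    qed
    show "{s. is_topk_indicator k (grad (fw_obj k theta lam c E) x) s} = {xs}"
      using topk unfolding f_def by auto
    show "line_search_argmax (fw_obj k theta lam c E) x (xs - x) = {1}"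
      using ls unfolding f_def .
    fix s \<gamma>
    assume h: "is_topk_indicator k (grad (fw_obj k theta lam c E) x) s \<and>
              \<gamma> \<in> line_search_argmax (fw_obj k theta lam c E) x (s - x)"
    then have "s = xs" using topk unfolding f_def by auto
    with h ls have "\<gamma> = 1" unfolding f_def by auto
    then show "x + \<gamma> *\<^sub>R (s - x) = xs" using \<open>s = xs\<close> by simp
  qed
qed

end
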